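(* A hypergraph $H$ is quasi-eulerian if and only if it admits a decomposition into cycles, i.e., a family of cycles of $H$ such that every edge of $H$ is traversed by exactly one cycle of the family.
   Context: A hypergraph $H=(V,E)$ consists of a finite nonempty vertex set $V$, a finite edge set $E$ disjoint from $V$, and an incidence function assigning to each edge $e\in E$ a subset of $V$ (also denoted $e$); distinct edges may have the same vertex set. Hypergraphs are assumed to have no empty edges. A walk is a sequence $W=v_0e_1v_1e_2\cdots e_kv_k$ with $v_i\in V$, $e_i\in E$, such that for each $i$, $v_{i-1}\ne v_i$ and $v_{i-1},v_i\in e_i$; the $v_i$ are its anchors. $W$ is closed if $k\ge 2$ and $v_0=v_k$; it is a strict trail if $e_1,\dots,e_k$ are pairwise distinct. A cycle is a closed walk $v_0e_1v_1\cdots e_kv_0$ in which $v_0,\dots,v_{k-1}$ are pairwise distinct and $e_1,\dots,e_k$ are pairwise distinct. An Euler family of $H$ is a family of closed strict trails such that every edge of $H$ lies in exactly one trail and no two trails have a common anchor; $H$ is quasi-eulerian if it has one. *)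

theory Defs
  imports Main
begin

text \<open>A hypergraph is given by a vertex set V (of type 'v), an edge set E (of type 'e;
  V and E are disjoint since they live in different types) and an incidence function inc.\<close>

definition hypergraph :: "'v set \<Rightarrow> 'e set \<Rightarrow> ('e \<Rightarrow> 'v set) \<Rightarrow> bool" where
  "hypergraph V E inc \<longleftrightarrow> finite V \<and> V \<noteq> {} \<and> finite E \<and>
     (\<forall>e\<in>E. inc e \<noteq> {} \<and> inc e \<subseteq> V)"

text \<open>A walk v0 e1 v1 ... ek vk is represented by the pair (vertex list [v0..vk], edge list [e1..ek]).\<close>

type_synonym ('v, 'e) walk = "'v list \<times> 'e list"

definition walk :: "'v set \<Rightarrow> 'e set \<Rightarrow> ('e \<Rightarrow> 'v set) \<Rightarrow> ('v, 'e) walk \<Rightarrow> bool" where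
  "walk V E inc W \<longleftrightarrow> (let vs = fst W; es = snd W in
     length vs = length es + 1 \<and> set vs \<subseteq> V \<and> set es \<subseteq> E \<and>
     (\<forall>i < length es. vs ! i \<noteq> vs ! Suc i \<and> vs ! i \<in> inc (es ! i) \<and> vs ! Suc i \<in> inc (es ! i)))"

definition anchors :: "('v, 'e) walk \<Rightarrow> 'v set" where
  "anchors W = set (fst W)"

definition walk_edges :: "('v, 'e) walk \<Rightarrow> 'e set" where
  "walk_edges W = set (snd W)"

definition closed_walk :: "'v set \<Rightarrow> 'e set \<Rightarrow> ('e \<Rightarrow> 'v set) \<Rightarrow> ('v, 'e) walk \<Rightarrow> bool" where
  "closed_walk V E inc W \<longleftrightarrow> walk V E inc W \<and> length (snd W) \<ge> 2 \<and> hd (fst W) = last (fst W)"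

definition strict_trail :: "'v set \<Rightarrow> 'e set \<Rightarrow> ('e \<Rightarrow> 'v set) \<Rightarrow> ('v, 'e) walk \<Rightarrow> bool" where
  "strict_trail V E inc W \<longleftrightarrow> walk V E inc W \<and> distinct (snd W)"

definition cycle :: "'v set \<Rightarrow> 'e set \<Rightarrow> ('e \<Rightarrow> 'v set) \<Rightarrow> ('v, 'e) walk \<Rightarrow> bool" where
  "cycle V E inc W \<longleftrightarrow> closed_walk V E inc W \<and> distinct (butlast (fst W)) \<and> distinct (snd W)"

definition euler_family :: "'v set \<Rightarrow> 'e set \<Rightarrow> ('e \<Rightarrow> 'v set) \<Rightarrow> ('v, 'e) walk set \<Rightarrow> bool" where
  "euler_family V E inc F \<longleftrightarrow>
     (\<forall>W\<in>F. closed_walk V E inc W \<and> strict_trail V E inc W) \<and>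
     (\<forall>e\<in>E. \<exists>!W. W \<in> F \<and> e \<in> walk_edges W) \<and>
     (\<forall>W\<in>F. \<forall>W'\<in>F. W \<noteq> W' \<longrightarrow> anchors W \<inter> anchors W' = {})"

definition quasi_eulerian :: "'v set \<Rightarrow> 'e set \<Rightarrow> ('e \<Rightarrow> 'v set) \<Rightarrow> bool" where
  "quasi_eulerian V E inc \<longleftrightarrow> (\<exists>F. euler_family V E inc F)"

definition cycle_decomposition :: "'v set \<Rightarrow> 'e set \<Rightarrow> ('e \<Rightarrow> 'v set) \<Rightarrow> ('v, 'e) walk set \<Rightarrow> bool" where
  "cycle_decomposition V E inc F \<longleftrightarrow>
     (\<forall>C\<in>F. cycle V E inc C) \<and> (\<forall>e\<in>E. \<exists>!C. C \<in> F \<and> e \<in> walk_edges C)"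

end

theory Submission
  imports Defs
begin

fun wk :: "('e \<Rightarrow> 'v set) \<Rightarrow> 'v list \<Rightarrow> 'e list \<Rightarrow> bool" where
  "wk inc [v] [] = True"
| "wk inc (v#w#vs) (e#es) = (v \<noteq> w \<and> v \<in> inc e \<and> w \<in> inc e \<and> wk inc (w#vs) es)"
| "wk inc _ _ = False"

lemma wk_nth: "wk inc vs es \<longleftrightarrow> length vs = Suc (length es) \<and>
   (\<forall>i<length es. vs!i \<noteq> vs!Suc i \<and> vs!i \<in> inc (es!i) \<and> vs!Suc i \<in> inc (es!i))"
proof (induction es arbitrary: vs)
  case Nil
  then show ?case by (cases vs; cases "tl vs") auto
next
  case (Cons e es)
  show ?case
  proof (cases vs)
    case Nil then show ?thesis by simp
  next
    case (Cons v vs')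
    show ?thesis
    proof (cases vs')
      case Nil then show ?thesis using Cons by simp
    next
      case (Cons w vs'')
      show ?thesis using \<open>vs = v # vs'\<close> Cons Cons.IH[of "w#vs''"]
        by (auto simp: less_Suc_eq_0_disj)
    qed
  qed
qed

lemma walk_iff: "walk V E inc W \<longleftrightarrow> wk inc (fst W) (snd W) \<and> set (fst W) \<subseteq> V \<and> set (snd W) \<subseteq> E"
  unfolding walk_def wk_nth Let_def by auto

lemma wk_len: "wk inc vs es \<Longrightarrow> length vs = Suc (length es)"
  by (simp add: wk_nth)

lemma wk_take: "wk inc vs es \<Longrightarrow> i \<le> length es \<Longrightarrow> wk inc (take (Suc i) vs) (take i es)"
  by (auto simp: wk_nth)

lemma wk_drop: "wk inc vs es \<Longrightarrow> i \<le> length es \<Longrightarrow> wk inc (drop i vs) (drop i es)"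
  by (auto simp: wk_nth)

lemma wk_append: "wk inc vs1 es1 \<Longrightarrow> wk inc vs2 es2 \<Longrightarrow> last vs1 = hd vs2 \<Longrightarrow>
   wk inc (vs1 @ tl vs2) (es1 @ es2)"
proof (induction inc vs1 es1 rule: wk.induct)
  case (1 inc v)
  then show ?case by (cases vs2) auto
next
  case (2 inc v w vs e es)
  then show ?case by auto
qed auto

lemma wk_concat: "wk inc vs1 es1 \<Longrightarrow> wk inc vs2 es2 \<Longrightarrow> last vs1 = hd vs2 \<Longrightarrow>
   wk inc (vs1 @ tl vs2) (es1 @ es2) \<and> set (vs1 @ tl vs2) = set vs1 \<union> set vs2 \<and>
   hd (vs1 @ tl vs2) = hd vs1 \<and> last (vs1 @ tl vs2) = last vs2"
proof -
  assume a: "wk inc vs1 es1" "wk inc vs2 es2" "last vs1 = hd vs2"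
  have n1: "vs1 \<noteq> []" and n2: "vs2 \<noteq> []" using wk_len[OF a(1)] wk_len[OF a(2)] by auto
  then obtain x ys where v2: "vs2 = x # ys" by (cases vs2) auto
  have "x \<in> set vs1" using a(3) n1 v2 by (metis last_in_set list.sel(1))
  then show ?thesis using wk_append[OF a] n1 v2 a(3) by auto
qed

lemma wk_two: "wk inc vs es \<Longrightarrow> hd vs = last vs \<Longrightarrow> es \<noteq> [] \<Longrightarrow> 2 \<le> length es"
proof (rule ccontr)
  assume a: "wk inc vs es" "hd vs = last vs" "es \<noteq> []" "\<not> 2 \<le> length es"
  then have "length es = 1" by (cases es) (auto simp: not_le)
  then have "length vs = 2" using wk_len[OF a(1)] by simp
  then obtain x y where "vs = [x,y]" by (metis length_0_conv length_Suc_conv numeral_2_eq_2)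
  then show False using a \<open>length es = 1\<close> by (auto simp: wk_nth)
qed

definition cst :: "'v set \<Rightarrow> 'e set \<Rightarrow> ('e \<Rightarrow> 'v set) \<Rightarrow> ('v, 'e) walk \<Rightarrow> bool" where
  "cst V E inc W \<longleftrightarrow> wk inc (fst W) (snd W) \<and> set (fst W) \<subseteq> V \<and> set (snd W) \<subseteq> E \<and>
     distinct (snd W) \<and> 2 \<le> length (snd W) \<and> hd (fst W) = last (fst W)"

lemma cst_iff: "cst V E inc W \<longleftrightarrow> closed_walk V E inc W \<and> strict_trail V E inc W"
  unfolding cst_def closed_walk_def strict_trail_def walk_iff by auto

lemma cycle_cst: "cycle V E inc W \<Longrightarrow> cst V E inc W"
  unfolding cst_def cycle_def closed_walk_def walk_iff by auto

lemma rot: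
  assumes "cst V E inc (vs, es)" "i \<le> length es"
  shows "cst V E inc (drop i vs @ tl (take (Suc i) vs), drop i es @ take i es) \<and>
    set (drop i vs @ tl (take (Suc i) vs)) = set vs \<and>
    hd (drop i vs @ tl (take (Suc i) vs)) = vs ! i \<and>
    set (drop i es @ take i es) = set es"
proof -
  have w: "wk inc vs es" and c: "hd vs = last vs" "distinct es" "2 \<le> length es" "set vs \<subseteq> V" "set es \<subseteq> E"
    using assms(1) by (auto simp: cst_def)
  have l: "length vs = Suc (length es)" using wk_len[OF w] .
  have w1: "wk inc (drop i vs) (drop i es)" using wk_drop[OF w assms(2)] .
  have w2: "wk inc (take (Suc i) vs) (take i es)" using wk_take[OF w assms(2)] .
  have "last (drop i vs) = hd (take (Suc i) vs)" using l assms(2) c(1) by (simp add: hd_conv_nth)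
  note C = wk_concat[OF w1 w2 this]
  have r: "drop i es @ take i es = rotate i es" using assms(2) by (cases "i = length es") (auto simp: rotate_drop_take)
  have s: "set (drop i vs) \<union> set (take (Suc i) vs) = set vs"
  proof -
    have "set vs = set (take i vs) \<union> set (drop i vs)" by (metis set_append append_take_drop_id)
    moreover have "set (take i vs) \<subseteq> set (take (Suc i) vs)" by (rule set_take_subset_set_take) simp
    moreover have "set (take (Suc i) vs) \<subseteq> set vs" "set (drop i vs) \<subseteq> set vs"
      by (auto simp: set_take_subset set_drop_subset)
    ultimately show ?thesis by blast
  qed
  have lastt: "last (take (Suc i) vs) = vs ! i" using l assms(2) by (subst last_conv_nth) (auto simp: min_def)
  show ?thesis using C r s c l assms(2) lastt
    by (auto simp: cst_def hd_drop_conv_nth)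
qed

lemma merge2:
  assumes "cst V E inc W1" "cst V E inc W2" "set (snd W1) \<inter> set (snd W2) = {}"
    "v \<in> set (fst W1)" "v \<in> set (fst W2)"
  shows "\<exists>W. cst V E inc W \<and> set (fst W) = set (fst W1) \<union> set (fst W2) \<and>
     set (snd W) = set (snd W1) \<union> set (snd W2)"
proof -
  obtain vs1 es1 where W1: "W1 = (vs1, es1)" by fastforce
  obtain vs2 es2 where W2: "W2 = (vs2, es2)" by fastforce
  have l1: "length vs1 = Suc (length es1)" using assms(1) W1 by (auto simp: cst_def wk_nth)
  have l2: "length vs2 = Suc (length es2)" using assms(2) W2 by (auto simp: cst_def wk_nth)
  obtain i where i: "i < length vs1" "vs1 ! i = v" using assms(4) W1 by (auto simp: in_set_conv_nth)
  obtain j where j: "j < length vs2" "vs2 ! j = v" using assms(5) W2 by (auto simp: in_set_conv_nth)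
  define a where "a = drop i vs1 @ tl (take (Suc i) vs1)"
  define b where "b = drop i es1 @ take i es1"
  define c where "c = drop j vs2 @ tl (take (Suc j) vs2)"
  define d where "d = drop j es2 @ take j es2"
  have R1: "cst V E inc (a, b) \<and> set a = set vs1 \<and> hd a = v \<and> set b = set es1"
    using rot[of V E inc vs1 es1 i] assms(1) W1 i l1 unfolding a_def b_def by auto
  have R2: "cst V E inc (c, d) \<and> set c = set vs2 \<and> hd c = v \<and> set d = set es2"
    using rot[of V E inc vs2 es2 j] assms(2) W2 j l2 unfolding c_def d_def by auto
  have wa: "wk inc a b" "hd a = last a" "distinct b" "2 \<le> length b" "set a \<subseteq> V" "set b \<subseteq> E"
    using R1 by (auto simp: cst_def)
  have wc: "wk inc c d" "hd c = last c" "distinct d" "2 \<le> length d" "set c \<subseteq> V" "set d \<subseteq> E"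
    using R2 by (auto simp: cst_def)
  have "last a = hd c" using wa R1 R2 by simp
  note C = wk_concat[OF wa(1) wc(1) this]
  have "cst V E inc (a @ tl c, b @ d)"
    using C wa wc R1 R2 assms(3) W1 W2 by (auto simp: cst_def)
  then show ?thesis using C R1 R2 W1 W2 by (intro exI[of _ "(a @ tl c, b @ d)"]) auto
qed

lemma merge_many:
  assumes "finite S"
  shows "(\<forall>X\<in>S. \<forall>Y\<in>S. X \<noteq> Y \<longrightarrow> set (snd X) \<inter> set (snd Y) = {}) \<Longrightarrow> (\<forall>X\<in>S. cst V E inc X) \<Longrightarrow>
    cst V E inc W \<Longrightarrow> (\<forall>X\<in>S. set (snd W) \<inter> set (snd X) = {}) \<Longrightarrow>
    (\<forall>X\<in>S. set (fst X) \<inter> set (fst W) \<noteq> {}) \<Longrightarrow>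
    \<exists>W'. cst V E inc W' \<and> set (fst W') = set (fst W) \<union> (\<Union>X\<in>S. set (fst X)) \<and>
       set (snd W') = set (snd W) \<union> (\<Union>X\<in>S. set (snd X))"
  using assms
proof (induction S arbitrary: W rule: finite_induct)
  case empty
  then show ?case by (intro exI[of _ W]) simp
next
  case (insert X S)
  obtain v where "v \<in> set (fst W)" "v \<in> set (fst X)" using insert.prems(5) by blast
  then obtain W1 where W1: "cst V E inc W1" "set (fst W1) = set (fst W) \<union> set (fst X)"
    "set (snd W1) = set (snd W) \<union> set (snd X)"
    using merge2[of V E inc W X v] insert.prems by auto
  have d: "\<forall>Y\<in>S. set (snd X) \<inter> set (snd Y) = {}" using insert.prems(1) insert.hyps(2) by auto
  have "\<exists>W'. cst V E inc W' \<and> set (fst W') = set (fst W1) \<union> (\<Union>X\<in>S. set (fst X)) \<and>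
       set (snd W') = set (snd W1) \<union> (\<Union>X\<in>S. set (snd X))"
    apply (rule insert.IH)
    using insert.prems W1 d by auto
  then obtain W' where "cst V E inc W'" "set (fst W') = set (fst W1) \<union> (\<Union>X\<in>S. set (fst X))"
       "set (snd W') = set (snd W1) \<union> (\<Union>X\<in>S. set (snd X))" by blast
  then show ?case using W1 by (intro exI[of _ W']) auto
qed

definition edisj :: "('v, 'e) walk set \<Rightarrow> bool" where
  "edisj F \<longleftrightarrow> (\<forall>X\<in>F. \<forall>Y\<in>F. X \<noteq> Y \<longrightarrow> set (snd X) \<inter> set (snd Y) = {})"

definition adisj :: "('v, 'e) walk set \<Rightarrow> bool" where
  "adisj F \<longleftrightarrow> (\<forall>X\<in>F. \<forall>Y\<in>F. X \<noteq> Y \<longrightarrow> set (fst X) \<inter> set (fst Y) = {})"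

lemma merge_all:
  assumes "finite F"
  shows "(\<forall>X\<in>F. cst V E inc X) \<Longrightarrow> edisj F \<Longrightarrow>
    \<exists>G. (\<forall>X\<in>G. cst V E inc X) \<and> edisj G \<and> adisj G \<and> (\<Union>X\<in>G. set (snd X)) = (\<Union>X\<in>F. set (snd X))"
  using assms
proof (induction F rule: finite_induct)
  case empty
  then show ?case by (intro exI[of _ "{}"]) (auto simp: edisj_def adisj_def)
next
  case (insert W F)
  have eF: "edisj F" using insert.prems(2) by (auto simp: edisj_def)
  obtain G where G: "\<forall>X\<in>G. cst V E inc X" "edisj G" "adisj G" "(\<Union>X\<in>G. set (snd X)) = (\<Union>X\<in>F. set (snd X))"
    using insert.IH insert.prems eF by auto
  have fG: "finite G"
  proof -
    have "finite (\<Union>X\<in>F. set (snd X))" using insert.hyps(1) by simp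
    then have fU: "finite (\<Union>X\<in>G. set (snd X))" using G(4) by simp
    have inj: "inj_on (\<lambda>X. hd (snd X)) G"
    proof (rule inj_onI)
      fix X Y assume "X \<in> G" "Y \<in> G" "hd (snd X) = hd (snd Y)"
      moreover have "snd X \<noteq> []" "snd Y \<noteq> []" using G(1) \<open>X \<in> G\<close> \<open>Y \<in> G\<close> by (auto simp: cst_def)
      ultimately show "X = Y" using G(2) unfolding edisj_def
        by (metis disjoint_iff list.set_sel(1))
    qed
    have "(\<lambda>X. hd (snd X)) ` G \<subseteq> (\<Union>X\<in>G. set (snd X))"
    proof
      fix x assume "x \<in> (\<lambda>X. hd (snd X)) ` G"
      then obtain X where "X \<in> G" "x = hd (snd X)" by blast
      moreover have "snd X \<noteq> []" using G(1) \<open>X \<in> G\<close> by (auto simp: cst_def)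
      ultimately show "x \<in> (\<Union>X\<in>G. set (snd X))" by (meson UN_I list.set_sel(1))
    qed
    then have "finite ((\<lambda>X. hd (snd X)) ` G)" using fU finite_subset by blast
    then show ?thesis using finite_imageD inj by blast
  qed
  define S where "S = {X\<in>G. set (fst X) \<inter> set (fst W) \<noteq> {}}"
  have fS: "finite S" using fG S_def by simp
  have WG: "\<forall>X\<in>G. set (snd W) \<inter> set (snd X) = {}"
  proof
    fix X assume "X \<in> G"
    have "\<forall>Y\<in>F. set (snd W) \<inter> set (snd Y) = {}"
      using insert.prems(2) insert.hyps(2) by (auto simp: edisj_def)
    then have "set (snd W) \<inter> (\<Union>X\<in>F. set (snd X)) = {}" by blast
    then show "set (snd W) \<inter> set (snd X) = {}" using G(4) \<open>X \<in> G\<close> by blast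
  qed
  have "\<exists>W'. cst V E inc W' \<and> set (fst W') = set (fst W) \<union> (\<Union>X\<in>S. set (fst X)) \<and>
       set (snd W') = set (snd W) \<union> (\<Union>X\<in>S. set (snd X))"
  proof -
    have SG: "S \<subseteq> G" unfolding S_def by blast
    have h1: "\<forall>X\<in>S. \<forall>Y\<in>S. X \<noteq> Y \<longrightarrow> set (snd X) \<inter> set (snd Y) = {}"
      using G(2) SG unfolding edisj_def by blast
    have h2: "\<forall>X\<in>S. cst V E inc X" using G(1) SG by blast
    have h3: "cst V E inc W" using insert.prems(1) by simp
    have h4: "\<forall>X\<in>S. set (snd W) \<inter> set (snd X) = {}" using WG SG by blast
    have h5: "\<forall>X\<in>S. set (fst X) \<inter> set (fst W) \<noteq> {}" unfolding S_def by blast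
    show ?thesis using merge_many[OF fS h1 h2 h3 h4 h5] by blast
  qed
  then obtain W' where W': "cst V E inc W'" "set (fst W') = set (fst W) \<union> (\<Union>X\<in>S. set (fst X))"
       "set (snd W') = set (snd W) \<union> (\<Union>X\<in>S. set (snd X))" by blast
  define G' where "G' = insert W' (G - S)"
  have a1: "\<forall>X\<in>G - S. set (fst W') \<inter> set (fst X) = {}"
  proof
    fix X assume X: "X \<in> G - S"
    then have "set (fst X) \<inter> set (fst W) = {}" using S_def by auto
    moreover have "\<forall>Y\<in>S. set (fst Y) \<inter> set (fst X) = {}"
    proof
      fix Y assume "Y \<in> S"
      then have "Y \<noteq> X" "Y \<in> G" "X \<in> G" using X unfolding S_def by auto
      then show "set (fst Y) \<inter> set (fst X) = {}" using G(3) unfolding adisj_def by blast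
    qed
    ultimately show "set (fst W') \<inter> set (fst X) = {}" using W'(2) by blast
  qed
  have e1: "\<forall>X\<in>G - S. set (snd W') \<inter> set (snd X) = {}"
  proof
    fix X assume X: "X \<in> G - S"
    have "\<forall>Y\<in>S. set (snd Y) \<inter> set (snd X) = {}"
    proof
      fix Y assume "Y \<in> S"
      then have "Y \<noteq> X" "Y \<in> G" "X \<in> G" using X unfolding S_def by auto
      then show "set (snd Y) \<inter> set (snd X) = {}" using G(2) unfolding edisj_def by blast
    qed
    then show "set (snd W') \<inter> set (snd X) = {}" using W'(3) WG X by blast
  qed
  have "\<forall>X\<in>G'. cst V E inc X" using G(1) W'(1) G'_def by auto
  moreover have "edisj G'" unfolding edisj_def
  proof (intro ballI impI)
    fix X Y assume XY: "X \<in> G'" "Y \<in> G'" "X \<noteq> Y"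
    show "set (snd X) \<inter> set (snd Y) = {}"
    proof (cases "X = W'")
      case True
      then have "Y \<in> G - S" using XY G'_def by auto
      then show ?thesis using e1 True by blast
    next
      case False
      show ?thesis
      proof (cases "Y = W'")
        case True
        then have "X \<in> G - S" using XY G'_def by auto
        then show ?thesis using e1 True by blast
      next
        case False
        then have "X \<in> G" "Y \<in> G" using XY \<open>X \<noteq> W'\<close> G'_def by auto
        then show ?thesis using G(2) XY(3) unfolding edisj_def by blast
      qed
    qed
  qed
  moreover have "adisj G'" unfolding adisj_def
  proof (intro ballI impI)
    fix X Y assume XY: "X \<in> G'" "Y \<in> G'" "X \<noteq> Y"
    show "set (fst X) \<inter> set (fst Y) = {}"
    proof (cases "X = W'")
      case True
      then have "Y \<in> G - S" using XY G'_def by auto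
      then show ?thesis using a1 True by blast
    next
      case False
      show ?thesis
      proof (cases "Y = W'")
        case True
        then have "X \<in> G - S" using XY G'_def by auto
        then show ?thesis using a1 True by blast
      next
        case False
        then have "X \<in> G" "Y \<in> G" using XY \<open>X \<noteq> W'\<close> G'_def by auto
        then show ?thesis using G(3) XY(3) unfolding adisj_def by blast
      qed
    qed
  qed
  moreover have "(\<Union>X\<in>G'. set (snd X)) = (\<Union>X\<in>insert W F. set (snd X))"
  proof -
    have SG: "S \<subseteq> G" unfolding S_def by blast
    have "(\<Union>X\<in>G'. set (snd X)) = set (snd W') \<union> (\<Union>X\<in>G - S. set (snd X))"
      unfolding G'_def by simp
    also have "\<dots> = set (snd W) \<union> ((\<Union>X\<in>S. set (snd X)) \<union> (\<Union>X\<in>G - S. set (snd X)))"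
      using W'(3) by auto
    also have "(\<Union>X\<in>S. set (snd X)) \<union> (\<Union>X\<in>G - S. set (snd X)) = (\<Union>X\<in>G. set (snd X))"
      using SG by (metis UN_Un Un_Diff_cancel2 sup.absorb_iff2 Un_commute)
    finally show ?thesis using G(4) by simp
  qed
  ultimately show ?case by blast
qed


lemma decomp:
  "cst V E inc (vs, es) \<Longrightarrow> \<exists>C. (\<forall>c\<in>C. cycle V E inc c) \<and> edisj C \<and> (\<Union>c\<in>C. set (snd c)) = set es"
proof (induction "length es" arbitrary: vs es rule: less_induct)
  case less
  have w: "wk inc vs es" and c: "hd vs = last vs" "distinct es" "2 \<le> length es" "set vs \<subseteq> V" "set es \<subseteq> E"
    using less.prems by (auto simp: cst_def)
  have l: "length vs = Suc (length es)" using wk_len[OF w] .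
  show ?case
  proof (cases "distinct (butlast vs)")
    case True
    then have "cycle V E inc (vs, es)" using less.prems
      by (auto simp: cycle_def closed_walk_def walk_iff cst_def)
    then show ?thesis by (intro exI[of _ "{(vs, es)}"]) (auto simp: edisj_def)
  next
    case False
    obtain i j where ij: "i < j" "j < length es" "vs ! i = vs ! j"
    proof -
      obtain a b where ab: "a < length (butlast vs)" "b < length (butlast vs)" "a \<noteq> b"
         "butlast vs ! a = butlast vs ! b"
        using False by (auto simp: distinct_conv_nth)
      then have "vs ! a = vs ! b" by (simp add: nth_butlast)
      moreover have "length (butlast vs) = length es" using l by simp
      ultimately show ?thesis using that ab
        by (metis linorder_neqE_nat)
    qed
    define P where "P = take i es"
    define Q where "Q = drop i (take j es)"
    define R where "R = drop j es"
    have es: "es = P @ Q @ R" unfolding P_def Q_def R_def using ij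
      by (metis append.assoc append_take_drop_id less_imp_le_nat min.absorb1 take_take)
    have lQ: "length Q = j - i" unfolding Q_def using ij by simp
    have lPR: "length P + length R = length es - (j - i)" unfolding P_def R_def using ij by simp
    define vA where "vA = drop i (take (Suc j) vs)"
    have wA: "wk inc vA Q" unfolding vA_def Q_def
      using wk_drop[OF wk_take[OF w, of j]] ij by simp
    have hA: "hd vA = vs ! i" unfolding vA_def using ij l by (simp add: hd_drop_conv_nth)
    have lA: "last vA = vs ! j" unfolding vA_def using ij l
      by (subst last_conv_nth) (auto simp: min_def)
    have sA: "set vA \<subseteq> set vs" unfolding vA_def by (meson order.trans set_drop_subset set_take_subset)
    have w1: "wk inc (take (Suc i) vs) P" unfolding P_def using wk_take[OF w, of i] ij by simp
    have w2: "wk inc (drop j vs) R" unfolding R_def using wk_drop[OF w, of j] ij by simp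
    have "last (take (Suc i) vs) = hd (drop j vs)" using ij l
      by (subst last_conv_nth) (auto simp: min_def hd_drop_conv_nth)
    note B = wk_concat[OF w1 w2 this]
    define vB where "vB = take (Suc i) vs @ tl (drop j vs)"
    have hB: "hd vB = last vB" unfolding vB_def using B ij l c(1)
      by (simp add: hd_conv_nth)
    have sB: "set vB \<subseteq> set vs" unfolding vB_def using B
      by (metis Un_subset_iff set_drop_subset set_take_subset)
    have dist: "distinct P" "distinct Q" "distinct R" "set P \<inter> set Q = {}" "set P \<inter> set R = {}"
      "set Q \<inter> set R = {}" using c(2) unfolding es by auto
    have QnE: "Q \<noteq> []" using lQ ij by (cases Q) auto
    have lQ2: "2 \<le> length Q" using wk_two[OF wA] hA lA ij QnE by simp
    have PRnE: "P @ R \<noteq> []" using lPR ij by auto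
    have lPR2: "2 \<le> length (P @ R)" using wk_two[OF conjunct1[OF B]] hB PRnE unfolding vB_def by simp
    have cA: "cst V E inc (vA, Q)" using wA hA lA ij dist lQ2 sA c unfolding cst_def es by auto
    have cB: "cst V E inc (vB, P @ R)" using B hB dist lPR2 sB c unfolding cst_def es vB_def by auto
    obtain CA where CA: "\<forall>c\<in>CA. cycle V E inc c" "edisj CA" "(\<Union>c\<in>CA. set (snd c)) = set Q"
      using less.hyps[OF _ cA] lQ lQ2 lPR ij by fastforce
    obtain CB where CB: "\<forall>c\<in>CB. cycle V E inc c" "edisj CB" "(\<Union>c\<in>CB. set (snd c)) = set (P @ R)"
      using less.hyps[OF _ cB] lQ2 lPR ij es by fastforce
    have "edisj (CA \<union> CB)" unfolding edisj_def
    proof (intro ballI impI)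
      fix X Y assume XY: "X \<in> CA \<union> CB" "Y \<in> CA \<union> CB" "X \<noteq> Y"
      have dd: "set Q \<inter> set (P @ R) = {}" using dist by auto
      show "set (snd X) \<inter> set (snd Y) = {}"
      proof (cases "X \<in> CA")
        case True
        show ?thesis
        proof (cases "Y \<in> CA")
          case True
          then show ?thesis using CA(2) \<open>X \<in> CA\<close> XY(3) unfolding edisj_def by blast
        next
          case False
          then have "Y \<in> CB" using XY by blast
          then show ?thesis using CA(3) CB(3) dd \<open>X \<in> CA\<close> by blast
        qed
      next
        case False
        then have "X \<in> CB" using XY by blast
        show ?thesis
        proof (cases "Y \<in> CA")
          case True
          then show ?thesis using CA(3) CB(3) dd \<open>X \<in> CB\<close> by blast
        next
          case False
          then have "Y \<in> CB" using XY by blast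
          then show ?thesis using CB(2) \<open>X \<in> CB\<close> XY(3) unfolding edisj_def by blast
        qed
      qed
    qed
    moreover have "(\<Union>c\<in>CA \<union> CB. set (snd c)) = set es" using CA(3) CB(3) es by auto
    ultimately show ?thesis using CA(1) CB(1) by (intro exI[of _ "CA \<union> CB"]) auto
  qed
qed


theorem theorem2p41:
  fixes V :: "'v set" and E :: "'e set" and inc :: "'e \<Rightarrow> 'v set"
  assumes "hypergraph V E inc"
  shows "quasi_eulerian V E inc \<longleftrightarrow> (\<exists>F. cycle_decomposition V E inc F)"
proof
  assume "quasi_eulerian V E inc"
  then obtain F where F: "euler_family V E inc F" unfolding quasi_eulerian_def by blast
  have cF: "\<forall>W\<in>F. cst V E inc W" using F unfolding euler_family_def cst_iff by blast
  have "\<forall>W\<in>F. \<exists>C. (\<forall>c\<in>C. cycle V E inc c) \<and> edisj C \<and> (\<Union>c\<in>C. set (snd c)) = set (snd W)"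
  proof
    fix W assume "W \<in> F"
    then have "cst V E inc (fst W, snd W)" using cF by simp
    then show "\<exists>C. (\<forall>c\<in>C. cycle V E inc c) \<and> edisj C \<and> (\<Union>c\<in>C. set (snd c)) = set (snd W)"
      by (rule decomp)
  qed
  then obtain Cf where Cf: "\<forall>W\<in>F. (\<forall>c\<in>Cf W. cycle V E inc c) \<and> edisj (Cf W) \<and>
      (\<Union>c\<in>Cf W. set (snd c)) = set (snd W)" by metis
  define D where "D = (\<Union>W\<in>F. Cf W)"
  have "cycle_decomposition V E inc D"
    unfolding cycle_decomposition_def
  proof (intro conjI ballI)
    fix c assume "c \<in> D"
    then show "cycle V E inc c" using Cf D_def by blast
  next
    fix e assume "e \<in> E"
    then obtain W where W: "W \<in> F" "e \<in> walk_edges W"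
      and Wu: "\<And>W'. W' \<in> F \<Longrightarrow> e \<in> walk_edges W' \<Longrightarrow> W' = W"
      using F unfolding euler_family_def by metis
    have "e \<in> (\<Union>c\<in>Cf W. set (snd c))" using Cf W by (simp add: walk_edges_def)
    then obtain c where c: "c \<in> Cf W" "e \<in> set (snd c)" by blast
    show "\<exists>!C. C \<in> D \<and> e \<in> walk_edges C"
    proof (rule ex1I[of _ c])
      show "c \<in> D \<and> e \<in> walk_edges c" using c W D_def by (auto simp: walk_edges_def)
    next
      fix c' assume c': "c' \<in> D \<and> e \<in> walk_edges c'"
      then obtain W' where W': "W' \<in> F" "c' \<in> Cf W'" unfolding D_def by blast
      have "e \<in> set (snd W')" using Cf W' c' by (auto simp: walk_edges_def)
      then have "W' = W" using Wu W' by (simp add: walk_edges_def)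
      then show "c' = c" using Cf W c c' W' unfolding edisj_def walk_edges_def by blast
    qed
  qed
  then show "\<exists>F. cycle_decomposition V E inc F" by blast
next
  assume "\<exists>F. cycle_decomposition V E inc F"
  then obtain F where F: "\<forall>C\<in>F. cycle V E inc C" "\<forall>e\<in>E. \<exists>!C. C \<in> F \<and> e \<in> walk_edges C"
    unfolding cycle_decomposition_def by blast
  have fE: "finite E" using assms unfolding hypergraph_def by blast
  have cF: "\<forall>X\<in>F. cst V E inc X" using F(1) cycle_cst by blast
  have sub: "\<forall>X\<in>F. set (snd X) \<subseteq> E" using cF unfolding cst_def by blast
  have eF: "edisj F" unfolding edisj_def
  proof (intro ballI impI)
    fix X Y assume XY: "X \<in> F" "Y \<in> F" "X \<noteq> Y"
    show "set (snd X) \<inter> set (snd Y) = {}"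
    proof (rule ccontr)
      assume "set (snd X) \<inter> set (snd Y) \<noteq> {}"
      then obtain e where e: "e \<in> set (snd X)" "e \<in> set (snd Y)" by blast
      then have "e \<in> E" using sub XY by blast
      then show False using F(2) e XY unfolding walk_edges_def by metis
    qed
  qed
  have fF: "finite F"
  proof -
    have inj: "inj_on (\<lambda>X. hd (snd X)) F"
    proof (rule inj_onI)
      fix X Y assume "X \<in> F" "Y \<in> F" "hd (snd X) = hd (snd Y)"
      moreover have "snd X \<noteq> []" "snd Y \<noteq> []" using cF \<open>X \<in> F\<close> \<open>Y \<in> F\<close> by (auto simp: cst_def)
      ultimately show "X = Y" using eF unfolding edisj_def
        by (metis disjoint_iff list.set_sel(1))
    qed
    have "(\<lambda>X. hd (snd X)) ` F \<subseteq> E"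
    proof
      fix x assume "x \<in> (\<lambda>X. hd (snd X)) ` F"
      then obtain X where "X \<in> F" "x = hd (snd X)" by blast
      moreover have "snd X \<noteq> []" using cF \<open>X \<in> F\<close> by (auto simp: cst_def)
      ultimately show "x \<in> E" using sub by (meson list.set_sel(1) subsetD)
    qed
    then have "finite ((\<lambda>X. hd (snd X)) ` F)" using fE finite_subset by blast
    then show ?thesis using finite_imageD inj by blast
  qed
  obtain G where G: "\<forall>X\<in>G. cst V E inc X" "edisj G" "adisj G"
    "(\<Union>X\<in>G. set (snd X)) = (\<Union>X\<in>F. set (snd X))"
    using merge_all[OF fF cF eF] by blast
  have "euler_family V E inc G" unfolding euler_family_def
  proof (intro conjI)
    show "\<forall>W\<in>G. closed_walk V E inc W \<and> strict_trail V E inc W" using G(1) cst_iff by blast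
  next
    show "\<forall>e\<in>E. \<exists>!W. W \<in> G \<and> e \<in> walk_edges W"
    proof
    fix e assume "e \<in> E"
    then obtain C where "C \<in> F" "e \<in> set (snd C)" using F(2) unfolding walk_edges_def by metis
    then have "e \<in> (\<Union>X\<in>G. set (snd X))" using G(4) by blast
    then obtain W where W: "W \<in> G" "e \<in> set (snd W)" by blast
    show "\<exists>!W. W \<in> G \<and> e \<in> walk_edges W"
    proof (rule ex1I[of _ W])
      show "W \<in> G \<and> e \<in> walk_edges W" using W by (simp add: walk_edges_def)
    next
      fix W' assume "W' \<in> G \<and> e \<in> walk_edges W'"
      then show "W' = W" using G(2) W unfolding edisj_def walk_edges_def by blast
    qed
    qed
  next
    show "\<forall>W\<in>G. \<forall>W'\<in>G. W \<noteq> W' \<longrightarrow> anchors W \<inter> anchors W' = {}"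
    proof (intro ballI impI)
    fix W W' assume "W \<in> G" "W' \<in> G" "W \<noteq> W'"
    then show "anchors W \<inter> anchors W' = {}" using G(3) unfolding adisj_def anchors_def by blast
  qed
  qed
  then show "quasi_eulerian V E inc" unfolding quasi_eulerian_def by blast
qed

end
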